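(* Let $K$ be a local field of characteristic $p>0$, and let $L$ be any totally ramified and purely inseparable extension of $K$ of degree $p^n$. Let $b$ be an integer with $0<b<p^n$ and $\gcd(b,p)=1$. Then there is an action of $\mathcal{A}(n)$ on $L$ which makes $L$ into an $\mathcal{A}(n)$-Hopf Galois extension of $K$, and which admits an $\mathcal{A}(n)$-scaffold on $L$ with all shift parameters equal to $b$ (i.e. $b_1=\dots=b_n=b$) and with tolerance $\mathfrak{T}=\infty$.
   Context: A local field here is a field complete with respect to a discrete valuation whose residue field has characteristic $p$; $v_K,v_L$ are normalized valuations, $\mathfrak{O}_K$ the valuation ring of $K$, $\mathfrak{P}_L$ the maximal ideal of $\mathfrak{O}_L$. The divided power $K$-Hopf algebra $\mathcal{A}(n)$ is the $K$-vector space with basis $t_0,\dots,t_{p^n-1}$, multiplication $t_it_j=\binom{i+j}{j}t_{i+j}$ if $i+j<p^n$ and $0$ otherwise, $t_0$ the identity, comultiplication $\Delta(t_r)=\sum_{j=0}^r t_j\otimes t_{r-j}$, counit $\epsilon(t_r)=\delta_{0,r}$, antipode $t_r\mapsto(-1)^rt_r$. For a $K$-Hopf algebra $H$, $L$ is an $H$-module algebra if $H$ acts $K$-linearly on $L$ with $h(st)=\mu(\Delta(h)(s\otimes t))$ ($\mu$ the multiplication of $L$) and $h\cdot1=\epsilon(h)1$; $L/K$ is $H$-Hopf Galois if moreover the map $L\otimes_K H\to\mathrm{End}_K(L)$, $(s\otimes h)\mapsto(x\mapsto s\,h(x))$, is bijective. Scaffolds: let $\mathbb{S}_{p^n}=\{0,\dots,p^n-1\}$,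 $s=\sum_{i=1}^n s_{(n-i)}p^{n-i}$ with digits in $\{0,\dots,p-1\}$; for integers $b_1,\dots,b_n$ prime to $p$, $\mathfrak{b}(s)=\sum_i s_{(n-i)}p^{n-i}b_i$ and $\mathfrak{a}(t)\in\mathbb{S}_{p^n}$ ($t\in\mathbb{Z}$) is the unique element with $\mathfrak{b}(\mathfrak{a}(t))\equiv-t\pmod{p^n}$. For a $K$-algebra $A$ of dimension $p^n$ acting $K$-linearly on $L$ (with $[L:K]=p^n$ totally ramified), an $A$-scaffold of tolerance $\infty$ with shift parameters $b_1,\dots,b_n$ consists of (i) $\lambda_t\in L$ ($t\in\mathbb{Z}$) with $v_L(\lambda_t)=t$ and $\lambda_{t_1}\lambda_{t_2}^{-1}\in K$ whenever $t_1\equiv t_2\pmod{p^n}$, and (ii) $\Psi_1,\dots,\Psi_n\in A$ with $\Psi_i\cdot1=0$ such that for each $i,t$ there is $u_{i,t}\in\mathfrak{O}_K^\times$ with $\Psi_i\cdot\lambda_t=u_{i,t}\lambda_{t+p^{n-i}b_i}$ if $\mathfrak{a}(t)_{(n-i)}\ge1$ and $\Psi_i\cdot\lambda_t=0$ if $\mathfrak{a}(t)_{(n-i)}=0$. *)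

theory Defs
  imports "HOL-Computational_Algebra.Primes"
begin

text \<open>The top field L is the whole type 'a; K is a subfield given as a set.
  v is the normalized valuation v_L of L on nonzero elements (its value at 0 is irrelevant,
  standing for infinity). The normalized valuation of K is v_K = v_L / p^n on K.\<close>

definition is_subfield :: "'a::field set \<Rightarrow> bool" where
  "is_subfield K \<longleftrightarrow> 0 \<in> K \<and> 1 \<in> K \<and>
     (\<forall>x\<in>K. \<forall>y\<in>K. x + y \<in> K \<and> x * y \<in> K) \<and>
     (\<forall>x\<in>K. - x \<in> K \<and> inverse x \<in> K)"

definition normalized_discrete_valuation :: "('a::field \<Rightarrow> int) \<Rightarrow> bool" where
  "normalized_discrete_valuation v \<longleftrightarrow>
     (\<forall>x y. x \<noteq> 0 \<longrightarrow> y \<noteq> 0 \<longrightarrow> v (x * y) = v x + v y) \<and>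
     (\<forall>x y. x \<noteq> 0 \<longrightarrow> y \<noteq> 0 \<longrightarrow> x + y \<noteq> 0 \<longrightarrow> v (x + y) \<ge> min (v x) (v y)) \<and>
     (\<forall>k. \<exists>x. x \<noteq> 0 \<and> v x = k)"

definition val_cauchy :: "('a::field \<Rightarrow> int) \<Rightarrow> (nat \<Rightarrow> 'a) \<Rightarrow> bool" where
  "val_cauchy v X \<longleftrightarrow>
     (\<forall>M. \<exists>N. \<forall>m\<ge>N. \<forall>k\<ge>N. X m = X k \<or> v (X m - X k) \<ge> M)"

definition val_converges :: "('a::field \<Rightarrow> int) \<Rightarrow> (nat \<Rightarrow> 'a) \<Rightarrow> 'a \<Rightarrow> bool" where
  "val_converges v X y \<longleftrightarrow> (\<forall>M. \<exists>N. \<forall>m\<ge>N. X m = y \<or> v (X m - y) \<ge> M)"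

definition val_complete :: "('a::field \<Rightarrow> int) \<Rightarrow> 'a set \<Rightarrow> bool" where
  "val_complete v K \<longleftrightarrow>
     (\<forall>X. (\<forall>m. X m \<in> K) \<longrightarrow> val_cauchy v X \<longrightarrow> (\<exists>y\<in>K. val_converges v X y))"

definition ext_degree_eq :: "'a::field set \<Rightarrow> nat \<Rightarrow> bool" where
  "ext_degree_eq K d \<longleftrightarrow>
     (\<exists>e :: nat \<Rightarrow> 'a. \<forall>x. \<exists>!c :: nat \<Rightarrow> 'a.
        (\<forall>i. c i \<in> K) \<and> (\<forall>i\<ge>d. c i = 0) \<and> x = (\<Sum>i<d. c i * e i))"

definition totally_ramified_index :: "('a::field \<Rightarrow> int) \<Rightarrow> 'a set \<Rightarrow> nat \<Rightarrow> bool" where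
  "totally_ramified_index v K d \<longleftrightarrow> {v x | x. x \<in> K \<and> x \<noteq> 0} = {int d * k | k. True}"

definition purely_inseparable :: "'a::field set \<Rightarrow> nat \<Rightarrow> bool" where
  "purely_inseparable K p \<longleftrightarrow> (\<forall>x::'a. \<exists>m. x ^ (p ^ m) \<in> K)"

definition K_linear :: "'a::field set \<Rightarrow> ('a \<Rightarrow> 'a) \<Rightarrow> bool" where
  "K_linear K f \<longleftrightarrow> (\<forall>x y. f (x + y) = f x + f y) \<and> (\<forall>c\<in>K. \<forall>x. f (c * x) = c * f x)"

text \<open>An action of A(n) on L, given by the operators T i = action of the basis element t_i
  (i < p^n); an element of A(n) is a coefficient vector c (c j in K, j < p^n) acting by
  sum c j * T j.\<close>
definition An_action :: "'a::field set \<Rightarrow> nat \<Rightarrow> nat \<Rightarrow> (nat \<Rightarrow> 'a \<Rightarrow> 'a) \<Rightarrow> bool" where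
  "An_action K p n T \<longleftrightarrow>
     (\<forall>i<p^n. K_linear K (T i)) \<and>
     (\<forall>x. T 0 x = x) \<and>
     (\<forall>i<p^n. \<forall>j<p^n. \<forall>x. T i (T j x) =
         (if i + j < p^n then of_nat ((i + j) choose j) * T (i + j) x else 0))"

definition An_elem_act :: "nat \<Rightarrow> nat \<Rightarrow> (nat \<Rightarrow> 'a \<Rightarrow> 'a) \<Rightarrow> (nat \<Rightarrow> 'a) \<Rightarrow> 'a \<Rightarrow> 'a::field" where
  "An_elem_act p n T c x = (\<Sum>j<p^n. c j * T j x)"

text \<open>L is an A(n)-module algebra (conditions on the basis; the rest follows by linearity).\<close>
definition An_module_algebra :: "'a::field set \<Rightarrow> nat \<Rightarrow> nat \<Rightarrow> (nat \<Rightarrow> 'a \<Rightarrow> 'a) \<Rightarrow> bool" where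
  "An_module_algebra K p n T \<longleftrightarrow> An_action K p n T \<and>
     (\<forall>r<p^n. \<forall>s t. T r (s * t) = (\<Sum>j\<le>r. T j s * T (r - j) t)) \<and>
     (\<forall>r<p^n. T r 1 = (if r = 0 then 1 else 0))"

text \<open>Hopf Galois: L (x)_K A(n) -> End_K(L), s (x) t_i |-> (x |-> s * T i x), is bijective.
  L (x)_K A(n) is the free L-module on 1 (x) t_i, i < p^n.\<close>
definition An_hopf_galois :: "'a::field set \<Rightarrow> nat \<Rightarrow> nat \<Rightarrow> (nat \<Rightarrow> 'a \<Rightarrow> 'a) \<Rightarrow> bool" where
  "An_hopf_galois K p n T \<longleftrightarrow> An_module_algebra K p n T \<and>
     (\<forall>f. K_linear K f \<longrightarrow> (\<exists>s. \<forall>x. f x = (\<Sum>i<p^n. s i * T i x))) \<and>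
     (\<forall>s s'. (\<forall>x. (\<Sum>i<p^n. s i * T i x) = (\<Sum>i<p^n. s' i * T i x))
        \<longrightarrow> (\<forall>i<p^n. s i = s' i))"

definition digit :: "nat \<Rightarrow> nat \<Rightarrow> nat \<Rightarrow> nat" where
  "digit p k s = (s div p ^ k) mod p"

definition frak_b :: "nat \<Rightarrow> nat \<Rightarrow> (nat \<Rightarrow> int) \<Rightarrow> nat \<Rightarrow> int" where
  "frak_b p n bs s = (\<Sum>i=1..n. int (digit p (n - i) s) * int (p ^ (n - i)) * bs i)"

definition frak_a :: "nat \<Rightarrow> nat \<Rightarrow> (nat \<Rightarrow> int) \<Rightarrow> int \<Rightarrow> nat" where
  "frak_a p n bs t = (THE s. s < p ^ n \<and> frak_b p n bs s mod int (p ^ n) = (- t) mod int (p ^ n))"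

text \<open>An A(n)-scaffold of tolerance infinity with shift parameters bs 1, ..., bs n, for the
  action T.  Psi i is the coefficient vector (in K) of an element of A(n).\<close>
definition An_scaffold_inf ::
  "'a::field set \<Rightarrow> ('a \<Rightarrow> int) \<Rightarrow> nat \<Rightarrow> nat \<Rightarrow> (nat \<Rightarrow> 'a \<Rightarrow> 'a) \<Rightarrow> (nat \<Rightarrow> int)
     \<Rightarrow> (int \<Rightarrow> 'a) \<Rightarrow> (nat \<Rightarrow> nat \<Rightarrow> 'a) \<Rightarrow> bool" where
  "An_scaffold_inf K v p n T bs lam Psi \<longleftrightarrow>
     (\<forall>i\<in>{1..n}. coprime (bs i) (int p)) \<and>
     (\<forall>t. lam t \<noteq> 0 \<and> v (lam t) = t) \<and>
     (\<forall>t1 t2. t1 mod int (p ^ n) = t2 mod int (p ^ n) \<longrightarrow> lam t1 * inverse (lam t2) \<in> K) \<and>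
     (\<forall>i\<in>{1..n}. (\<forall>j. Psi i j \<in> K) \<and> An_elem_act p n T (Psi i) 1 = 0) \<and>
     (\<forall>i\<in>{1..n}. \<forall>t.
        (digit p (n - i) (frak_a p n bs t) \<ge> 1 \<longrightarrow>
           (\<exists>u\<in>K. u \<noteq> 0 \<and> v u = 0 \<and>
              An_elem_act p n T (Psi i) (lam t) = u * lam (t + int (p ^ (n - i)) * bs i))) \<and>
        (digit p (n - i) (frak_a p n bs t) = 0 \<longrightarrow>
           An_elem_act p n T (Psi i) (lam t) = 0))"

end

theory Submission
  imports Defs "HOL-Computational_Algebra.Computational_Algebra"
begin



lemma prime_dvd_choose_pow:
  assumes "prime (p::nat)" "0 < j" "j < p ^ m"
  shows "p dvd (p ^ m choose j)"
proof (rule ccontr)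
  assume nd: "\<not> p dvd (p ^ m choose j)"
  have "j * (p ^ m choose j) = p ^ m * ((p ^ m - 1) choose (j - 1))"
    using times_binomial_minus1_eq[OF assms(2)] by simp
  hence "p ^ m dvd j * (p ^ m choose j)" by simp
  moreover have "coprime (p ^ m) (p ^ m choose j)"
    using nd assms(1) by (simp add: prime_imp_coprime coprime_commute)
  ultimately have "p ^ m dvd j" using coprime_dvd_mult_left_iff by blast
  with assms(2,3) show False by (simp add: nat_dvd_not_less)
qed

context
  fixes p :: nat
  assumes pr: "prime p" and ch: "of_nat p = (0::'a::field)"
begin

lemma ofnat_choose_pow0: "0 < j \<Longrightarrow> j < p ^ m \<Longrightarrow> (of_nat (p ^ m choose j) :: 'a) = 0"
proof -
  assume a: "0 < j" "j < p ^ m"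
  obtain k where "(p ^ m choose j) = p * k" using prime_dvd_choose_pow[OF pr a] by (auto elim!: dvdE)
  thus ?thesis using ch by simp
qed

lemma ofnat_choose_mult:
  "(of_nat (q * p ^ m choose l) :: 'a) = (if l = 0 then 1 else if l < p ^ m then 0 else if l = p ^ m then of_nat q else of_nat (q * p ^ m choose l))"
proof (induction q arbitrary: l)
  case 0 then show ?case by (cases l) auto
next
  case (Suc q)
  let ?P = "p ^ m"
  have P0: "0 < ?P" using pr by (simp add: prime_gt_0_nat)
  have e: "Suc q * ?P = q * ?P + ?P" by simp
  have v: "(Suc q * ?P choose l) = (\<Sum>k\<le>l. (q * ?P choose k) * (?P choose (l - k)))"
    unfolding e by (rule vandermonde[symmetric])
  show ?case
  proof (cases "l = 0")
    case True then show ?thesis by simp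
  next
    case l0: False
    show ?thesis
    proof (cases "l \<le> ?P")
      case True
      have "(of_nat (Suc q * ?P choose l) :: 'a) = (\<Sum>k\<le>l. of_nat (q * ?P choose k) * of_nat (?P choose (l - k)))"
        by (simp only: v of_nat_sum of_nat_mult)
      also have "\<dots> = (\<Sum>k\<le>l. (if k = 0 then of_nat (?P choose l) else 0) + (if k = l \<and> l = ?P then of_nat q else 0))"
      proof (rule sum.cong[OF refl])
        fix k assume k: "k \<in> {..l}"
        show "(of_nat (q * ?P choose k) :: 'a) * of_nat (?P choose (l - k)) = (if k = 0 then of_nat (?P choose l) else 0) + (if k = l \<and> l = ?P then of_nat q else 0)"
        proof (cases "k = 0")
          case True then show ?thesis using l0 by auto
        next
          case k0: False
          show ?thesis
          proof (cases "k = l")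
            case True then show ?thesis using Suc.IH[of k] k0 \<open>l \<le> ?P\<close> by auto
          next
            case False
            hence "k < ?P" using k \<open>l \<le> ?P\<close> by auto
            then show ?thesis using Suc.IH[of k] k0 False by auto
          qed
        qed
      qed
      also have "\<dots> = of_nat (?P choose l) + (if l = ?P then of_nat q else 0)"
        by (simp add: sum.distrib)
      finally show ?thesis using l0 True ofnat_choose_pow0[of l m] by (auto simp: algebra_simps)
    next
      case False then show ?thesis by simp
    qed
  qed
qed

lemma ofnat_choose_digit:
  "(of_nat (s choose p ^ m) :: 'a) = of_nat ((s div p ^ m) mod p)"
proof -
  let ?P = "p ^ m"
  have P0: "0 < ?P" using pr by (simp add: prime_gt_0_nat)
  define q r where "q = s div ?P" and "r = s mod ?P"
  have s: "s = q * ?P + r" by (metis q_def r_def div_mult_mod_eq)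
  have r: "r < ?P" using P0 by (simp add: r_def)
  have "(of_nat (s choose ?P) :: 'a) = (\<Sum>k\<le>?P. of_nat (q * ?P choose k) * of_nat (r choose (?P - k)))"
    unfolding s vandermonde[of "q * ?P" r ?P, symmetric] by (simp only: of_nat_sum of_nat_mult)
  also have "\<dots> = (\<Sum>k\<le>?P. if k = ?P then of_nat q else 0)"
  proof (rule sum.cong[OF refl])
    fix k assume "k \<in> {..?P}"
    then show "(of_nat (q * ?P choose k) :: 'a) * of_nat (r choose (?P - k)) = (if k = ?P then of_nat q else 0)"
      using ofnat_choose_mult[of q m k] r P0 by (cases "k = 0") (auto simp: binomial_eq_0)
  qed
  also have "\<dots> = of_nat q" by simp
  also have "(of_nat q :: 'a) = of_nat (q mod p)"
  proof -
    have "q = q div p * p + q mod p" by simp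
    hence "(of_nat q :: 'a) = of_nat (q div p) * of_nat p + of_nat (q mod p)"
      by (metis of_nat_add of_nat_mult)
    thus ?thesis using ch by simp
  qed
  finally show ?thesis by (simp add: q_def)
qed

lemma ofnat_choose_shift:
  assumes "r < p ^ n"
  shows "(of_nat (q * p ^ n + m0 choose r) :: 'a) = of_nat (m0 choose r)"
proof -
  have "(of_nat (q * p ^ n + m0 choose r) :: 'a) = (\<Sum>k\<le>r. of_nat (q * p ^ n choose k) * of_nat (m0 choose (r - k)))"
    unfolding vandermonde[of "q * p ^ n" m0 r, symmetric] by (simp only: of_nat_sum of_nat_mult)
  also have "\<dots> = (\<Sum>k\<le>r. if k = 0 then of_nat (m0 choose r) else 0)"
  proof (rule sum.cong[OF refl])
    fix k assume "k \<in> {..r}"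
    then show "(of_nat (q * p ^ n choose k) :: 'a) * of_nat (m0 choose (r - k)) = (if k = 0 then of_nat (m0 choose r) else 0)"
      using ofnat_choose_mult[of q n k] assms by auto
  qed
  finally show ?thesis by simp
qed

end




section \<open>Valuations\<close>

context
  fixes v :: "'a::field \<Rightarrow> int"
  assumes nv: "normalized_discrete_valuation v"
begin

lemma v_mult: "x \<noteq> 0 \<Longrightarrow> y \<noteq> 0 \<Longrightarrow> v (x * y) = v x + v y"
  using nv unfolding normalized_discrete_valuation_def by blast

lemma v_add: "x \<noteq> 0 \<Longrightarrow> y \<noteq> 0 \<Longrightarrow> x + y \<noteq> 0 \<Longrightarrow> v (x + y) \<ge> min (v x) (v y)"
  using nv unfolding normalized_discrete_valuation_def by blast

lemma v_one: "v 1 = 0"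
  using v_mult[of 1 1] by simp

lemma v_minus_one: "v (-1) = 0"
  using v_mult[of "-1" "-1"] v_one by simp

lemma v_neg: "x \<noteq> 0 \<Longrightarrow> v (- x) = v x"
  using v_mult[of "-1" x] v_minus_one by simp

lemma v_inverse: "x \<noteq> 0 \<Longrightarrow> v (inverse x) = - v x"
  using v_mult[of x "inverse x"] v_one by simp

lemma v_power: "x \<noteq> 0 \<Longrightarrow> v (x ^ k) = int k * v x"
  by (induction k) (auto simp: v_one v_mult algebra_simps)

lemma v_add_ne:
  assumes "x \<noteq> 0" "y \<noteq> 0" "v x \<noteq> v y"
  shows "x + y \<noteq> 0 \<and> v (x + y) = min (v x) (v y)"
proof -
  have nz: "x + y \<noteq> 0"
  proof
    assume "x + y = 0" hence "y = - x" by (simp add: eq_neg_iff_add_eq_0 add.commute)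
    thus False using assms v_neg by simp
  qed
  have ge: "v (x + y) \<ge> min (v x) (v y)" using v_add assms nz by blast
  have "v x \<ge> min (v (x + y)) (v y)" using v_add[of "x + y" "- y"] nz assms v_neg[of y] by simp
  moreover have "v y \<ge> min (v (x + y)) (v x)" using v_add[of "x + y" "- x"] nz assms v_neg[of x] by simp
  ultimately have "v (x + y) = min (v x) (v y)" using ge assms(3) by linarith
  with nz show ?thesis by blast
qed

lemma v_sum_ne:
  assumes "finite S" "S \<noteq> {}" "\<forall>i\<in>S. f i \<noteq> 0" "inj_on (\<lambda>i. v (f i)) S"
  shows "sum f S \<noteq> 0 \<and> v (sum f S) = Min ((\<lambda>i. v (f i)) ` S)"
  using assms
proof (induction S rule: finite_ne_induct)
  case (singleton x) then show ?case by simp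
next
  case (insert x F)
  have inj: "inj_on (\<lambda>i. v (f i)) F" using insert.prems(2) inj_on_subset by blast
  have IH: "sum f F \<noteq> 0 \<and> v (sum f F) = Min ((\<lambda>i. v (f i)) ` F)"
    using insert.IH insert.prems(1) inj by blast
  have mem: "Min ((\<lambda>i. v (f i)) ` F) \<in> (\<lambda>i. v (f i)) ` F" using insert.hyps(1,2) by simp
  have "v (f x) \<notin> (\<lambda>i. v (f i)) ` F"
    using insert.prems(2) insert.hyps(3) unfolding inj_on_def by blast
  hence ne: "v (f x) \<noteq> v (sum f F)" using IH mem by metis
  have fx: "f x \<noteq> 0" using insert.prems(1) by blast
  have A: "f x + sum f F \<noteq> 0 \<and> v (f x + sum f F) = min (v (f x)) (v (sum f F))"
    using v_add_ne[OF fx _ ne] IH by blast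
  have sm: "sum f (insert x F) = f x + sum f F" using insert.hyps(1,3) by simp
  have mn: "Min ((\<lambda>i. v (f i)) ` insert x F) = min (v (f x)) (Min ((\<lambda>i. v (f i)) ` F))"
    using insert.hyps(1,2) by (simp add: Min_insert)
  show ?case using A IH sm mn by simp
qed

lemma v_sum_nonzero:
  assumes "finite S" "\<exists>i\<in>S. f i \<noteq> 0" "inj_on (\<lambda>i. v (f i)) {i\<in>S. f i \<noteq> 0}"
  shows "sum f S \<noteq> 0"
proof -
  have "sum f S = sum f {i\<in>S. f i \<noteq> 0}" by (rule sum.mono_neutral_right[OF assms(1)]) auto
  moreover have "sum f {i\<in>S. f i \<noteq> 0} \<noteq> 0"
  proof -
    have "finite {i\<in>S. f i \<noteq> 0}" "{i\<in>S. f i \<noteq> 0} \<noteq> {}" "\<forall>i\<in>{i\<in>S. f i \<noteq> 0}. f i \<noteq> 0"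
      using assms(1,2) by auto
    from v_sum_ne[OF this assms(3)] show ?thesis by blast
  qed
  ultimately show ?thesis by simp
qed

end



context
  fixes K :: "'a::field set"
  assumes sf: "is_subfield K"
begin

lemma K0: "0 \<in> K" and K1: "1 \<in> K" using sf unfolding is_subfield_def by auto
lemma Kadd: "x \<in> K \<Longrightarrow> y \<in> K \<Longrightarrow> x + y \<in> K" using sf unfolding is_subfield_def by auto
lemma Kmult: "x \<in> K \<Longrightarrow> y \<in> K \<Longrightarrow> x * y \<in> K" using sf unfolding is_subfield_def by auto
lemma Kneg: "x \<in> K \<Longrightarrow> - x \<in> K" using sf unfolding is_subfield_def by auto
lemma Kinv: "x \<in> K \<Longrightarrow> inverse x \<in> K" using sf unfolding is_subfield_def by auto
lemma Ksub: "x \<in> K \<Longrightarrow> y \<in> K \<Longrightarrow> x - y \<in> K" using Kadd Kneg by (metis diff_conv_add_uminus)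
lemma Kdiv: "x \<in> K \<Longrightarrow> y \<in> K \<Longrightarrow> x / y \<in> K" using Kmult Kinv by (metis divide_inverse)
lemma Kpow: "x \<in> K \<Longrightarrow> x ^ k \<in> K" by (induction k) (auto simp: K1 Kmult)
lemma Kpowi: "x \<in> K \<Longrightarrow> x powi k \<in> K" unfolding power_int_def by (auto simp: Kpow Kinv)
lemma Ksum: "(\<And>i. i \<in> S \<Longrightarrow> f i \<in> K) \<Longrightarrow> sum f S \<in> K"
  by (induction S rule: infinite_finite_induct) (auto simp: K0 Kadd)
lemma Kofnat: "of_nat k \<in> K" by (induction k) (auto simp: K0 K1 Kadd)

section \<open>Linear algebra over K\<close>

lemma dependent:
  assumes "finite J" "d < card J" "\<forall>j\<in>J. \<forall>i<d. w j i \<in> K"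
  shows "\<exists>c. (\<forall>j\<in>J. c j \<in> K) \<and> (\<exists>j\<in>J. c j \<noteq> 0) \<and> (\<forall>i<d. (\<Sum>j\<in>J. c j * w j i) = 0)"
  using assms
proof (induction d arbitrary: J w)
  case 0
  then obtain j where "j \<in> J" by fastforce
  then show ?case by (intro exI[of _ "\<lambda>_. 1"]) (auto simp: K1)
next
  case (Suc d)
  show ?case
  proof (cases "\<forall>j\<in>J. w j d = 0")
    case True
    obtain c where c: "\<forall>j\<in>J. c j \<in> K" "\<exists>j\<in>J. c j \<noteq> 0" "\<forall>i<d. (\<Sum>j\<in>J. c j * w j i) = 0"
      using Suc.IH[of J w] Suc.prems by auto
    have "\<forall>i<Suc d. (\<Sum>j\<in>J. c j * w j i) = 0"
    proof (intro allI impI)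
      fix i assume "i < Suc d"
      then show "(\<Sum>j\<in>J. c j * w j i) = 0" using c(3) True by (cases "i = d") auto
    qed
    with c show ?thesis by blast
  next
    case False
    then obtain j0 where j0: "j0 \<in> J" "w j0 d \<noteq> 0" by blast
    define J' where "J' = J - {j0}"
    define w' where "w' j i = w j i - (w j d / w j0 d) * w j0 i" for j i
    have fJ': "finite J'" using Suc.prems by (simp add: J'_def)
    have cJ': "d < card J'" using Suc.prems j0 by (simp add: J'_def)
    have wK: "\<forall>j\<in>J'. \<forall>i<d. w' j i \<in> K"
      using Suc.prems j0 by (auto simp: w'_def J'_def intro!: Ksub Kmult Kdiv)
    obtain c' where c': "\<forall>j\<in>J'. c' j \<in> K" "\<exists>j\<in>J'. c' j \<noteq> 0" "\<forall>i<d. (\<Sum>j\<in>J'. c' j * w' j i) = 0"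
      using Suc.IH[OF fJ' cJ' wK] by blast
    define S where "S = (\<Sum>j\<in>J'. c' j * w j d)"
    define c where "c j = (if j = j0 then - S / w j0 d else c' j)" for j
    have SK: "S \<in> K" unfolding S_def using c'(1) Suc.prems(3) by (auto simp: J'_def intro!: Ksum Kmult)
    have cK: "\<forall>j\<in>J. c j \<in> K" using c'(1) SK Suc.prems(3) j0 by (auto simp: c_def J'_def intro!: Kdiv Kneg)
    have cnz: "\<exists>j\<in>J. c j \<noteq> 0" using c'(2) by (auto simp: c_def J'_def)
    have split: "(\<Sum>j\<in>J. c j * w j i) = c j0 * w j0 i + (\<Sum>j\<in>J'. c' j * w j i)" for i
    proof -
      have "(\<Sum>j\<in>J. c j * w j i) = c j0 * w j0 i + (\<Sum>j\<in>J'. c j * w j i)"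
        using Suc.prems(1) j0 by (simp add: J'_def sum.remove)
      also have "(\<Sum>j\<in>J'. c j * w j i) = (\<Sum>j\<in>J'. c' j * w j i)"
        by (rule sum.cong) (auto simp: c_def J'_def)
      finally show ?thesis .
    qed
    have "\<forall>i<Suc d. (\<Sum>j\<in>J. c j * w j i) = 0"
    proof (intro allI impI)
      fix i assume i: "i < Suc d"
      show "(\<Sum>j\<in>J. c j * w j i) = 0"
      proof (cases "i = d")
        case True
        then show ?thesis unfolding split[of i] using j0 by (simp add: c_def S_def)
      next
        case False
        hence "i < d" using i by simp
        hence "(\<Sum>j\<in>J'. c' j * w' j i) = 0" using c'(3) by blast
        hence "(\<Sum>j\<in>J'. c' j * w j i) - (\<Sum>j\<in>J'. c' j * w j d) / w j0 d * w j0 i = 0"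
        proof -
          have e1: "(\<Sum>j\<in>J'. c' j * w' j i) = (\<Sum>j\<in>J'. c' j * w j i) - (\<Sum>j\<in>J'. c' j * (w j d / w j0 d * w j0 i))"
            unfolding w'_def by (simp add: right_diff_distrib sum_subtractf)
          have e2: "(\<Sum>j\<in>J'. c' j * (w j d / w j0 d * w j0 i)) = (\<Sum>j\<in>J'. c' j * w j d) / w j0 d * w j0 i"
            by (simp add: sum_distrib_right sum_divide_distrib mult.assoc)
          show ?thesis using e1 e2 \<open>(\<Sum>j\<in>J'. c' j * w' j i) = 0\<close> by simp
        qed
        thus ?thesis unfolding split[of i] using j0 by (simp add: c_def S_def algebra_simps)
      qed
    qed
    with cK cnz show ?thesis by blast
  qed
qed

end




lemma span_lemma:
  fixes K :: "'a::field set"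
  assumes sf: "is_subfield K" and ext: "ext_degree_eq K d"
    and indep: "\<forall>a. (\<forall>j<d. a j \<in> K) \<longrightarrow> (\<Sum>j<d. a j * z j) = 0 \<longrightarrow> (\<forall>j<d. a j = 0)"
  shows "\<exists>a. (\<forall>j<d. a j \<in> K) \<and> y = (\<Sum>j<d. a j * z j)"
proof -
  obtain e :: "nat \<Rightarrow> 'a" where e: "\<forall>x. \<exists>!c. (\<forall>i. c i \<in> K) \<and> (\<forall>i\<ge>d. c i = 0) \<and> x = (\<Sum>i<d. c i * e i)"
    using ext unfolding ext_degree_eq_def by (elim exE) (rule that)
  have "\<forall>x. \<exists>c. (\<forall>i. c i \<in> K) \<and> x = (\<Sum>i<d. c i * e i)"
  proof
    fix x from ex1_implies_ex[OF e[rule_format, of x]] show "\<exists>c. (\<forall>i. c i \<in> K) \<and> x = (\<Sum>i<d. c i * e i)" by blast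
  qed
  then obtain ce where ce0: "\<forall>x. (\<forall>i. ce x i \<in> K) \<and> x = (\<Sum>i<d. ce x i * e i)" using choice[of "\<lambda>x c. (\<forall>i. c i \<in> K) \<and> x = (\<Sum>i<d. c i * e i)"] by blast
  have ce: "\<And>x. (\<forall>i. ce x i \<in> K) \<and> x = (\<Sum>i<d. ce x i * e i)" using ce0 by blast
  have ceK: "\<And>x i. ce x i \<in> K" using ce0 by blast
  define zz where "zz j = (if j < d then z j else y)" for j
  obtain c where c: "\<forall>j\<in>{..d}. c j \<in> K" "\<exists>j\<in>{..d}. c j \<noteq> 0" "\<forall>i<d. (\<Sum>j\<in>{..d}. c j * ce (zz j) i) = 0"
    using dependent[OF sf, of "{..d}" d "\<lambda>j i. ce (zz j) i"] ceK by auto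
  have "(\<Sum>j\<in>{..d}. c j * zz j) = (\<Sum>j\<in>{..d}. c j * (\<Sum>i<d. ce (zz j) i * e i))"
  proof (rule sum.cong[OF refl])
    fix j
    have "zz j = (\<Sum>i<d. ce (zz j) i * e i)" using ce[of "zz j"] by blast
    thus "c j * zz j = c j * (\<Sum>i<d. ce (zz j) i * e i)" by (rule arg_cong)
  qed
  also have "\<dots> = (\<Sum>j\<in>{..d}. \<Sum>i<d. c j * ce (zz j) i * e i)"
    by (simp add: sum_distrib_left mult.assoc)
  also have "\<dots> = (\<Sum>i<d. \<Sum>j\<in>{..d}. c j * ce (zz j) i * e i)"
    by (rule sum.swap)
  also have "\<dots> = (\<Sum>i<d. (\<Sum>j\<in>{..d}. c j * ce (zz j) i) * e i)"
    by (simp add: sum_distrib_right)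
  also have "\<dots> = 0" using c(3) by simp
  finally have tot: "(\<Sum>j\<in>{..d}. c j * zz j) = 0" .
  have atm: "{..d} = insert d {..<d}" by auto
  have tot2: "(\<Sum>j<d. c j * z j) + c d * y = 0"
  proof -
    have "(\<Sum>j\<in>{..d}. c j * zz j) = c d * zz d + (\<Sum>j<d. c j * zz j)" unfolding atm by simp
    also have "(\<Sum>j<d. c j * zz j) = (\<Sum>j<d. c j * z j)" by (rule sum.cong) (auto simp: zz_def)
    finally show ?thesis using tot by (simp add: zz_def add.commute)
  qed
  show ?thesis
  proof (cases "c d = 0")
    case True
    hence "(\<Sum>j<d. c j * z j) = 0" using tot2 by simp
    hence "\<forall>j<d. c j = 0" using indep c(1) by auto
    moreover obtain j where "j \<le> d" "c j \<noteq> 0" using c(2) by auto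
    ultimately show ?thesis using True by (cases "j = d") auto
  next
    case False
    have "y = (\<Sum>j<d. (- c j / c d) * z j)"
    proof -
      have "c d * y = - (\<Sum>j<d. c j * z j)" using tot2 by (simp add: eq_neg_iff_add_eq_0 add.commute)
      hence "y = - (\<Sum>j<d. c j * z j) / c d" using False by (simp add: field_simps)
      also have "\<dots> = (\<Sum>j<d. (- c j / c d) * z j)"
        by (simp add: sum_divide_distrib sum_negf)
      finally show ?thesis .
    qed
    moreover have "\<forall>j<d. - c j / c d \<in> K" using c(1) by (auto intro!: Kdiv[OF sf] Kneg[OF sf])
    ultimately show ?thesis by (intro exI[of _ "\<lambda>j. - c j / c d"] conjI)
  qed
qed

lemma small_dvd_zero: "int d dvd x \<Longrightarrow> \<bar>x\<bar> < int d \<Longrightarrow> x = 0"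
proof (rule ccontr)
  assume a: "int d dvd x" "\<bar>x\<bar> < int d" "x \<noteq> 0"
  from dvd_imp_le_int[OF a(3) a(1)] a(2) show False by simp
qed

lemma pow_indep:
  fixes K :: "'a::field set"
  assumes nv: "normalized_discrete_valuation v"
    and tr: "totally_ramified_index v K d"
    and z: "z \<noteq> 0" and cop: "coprime (v z) (int d)"
    and aK: "\<forall>j<d. a j \<in> K" and s: "(\<Sum>j<d. a j * z ^ j) = 0"
  shows "\<forall>j<d. a j = 0"
proof (rule ccontr)
  assume "\<not> (\<forall>j<d. a j = 0)"
  hence ex: "\<exists>j\<in>{..<d}. a j * z ^ j \<noteq> 0" using z by auto
  have vK: "\<exists>k. v (a j) = int d * k" if "j < d" "a j \<noteq> 0" for j
  proof -
    have "v (a j) \<in> {v x | x. x \<in> K \<and> x \<noteq> 0}" using that aK by blast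
    thus ?thesis using tr unfolding totally_ramified_index_def by auto
  qed
  have "inj_on (\<lambda>j. v (a j * z ^ j)) {j\<in>{..<d}. a j * z ^ j \<noteq> 0}"
  proof (rule inj_onI)
    fix j k assume j: "j \<in> {j\<in>{..<d}. a j * z ^ j \<noteq> 0}" and k: "k \<in> {j\<in>{..<d}. a j * z ^ j \<noteq> 0}"
      and eq: "v (a j * z ^ j) = v (a k * z ^ k)"
    have aj: "a j \<noteq> 0" "j < d" using j by auto
    have ak: "a k \<noteq> 0" "k < d" using k by auto
    obtain kj kk where kj: "v (a j) = int d * kj" and kk: "v (a k) = int d * kk" using vK aj ak by metis
    have "v (a j) + int j * v z = v (a k) + int k * v z"
      using eq aj ak z by (simp add: v_mult[OF nv] v_power[OF nv])
    hence "(int k - int j) * v z = int d * (kj - kk)" using kj kk by (simp add: algebra_simps)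
    hence "int d dvd (int k - int j) * v z" by (metis dvd_triv_left)
    hence "int d dvd (int k - int j)"
      using coprime_dvd_mult_left_iff[of "int d" "v z" "int k - int j"] cop by (simp add: coprime_commute)
    moreover have "\<bar>int k - int j\<bar> < int d" using aj ak by linarith
    ultimately show "j = k" using small_dvd_zero[where x="int k - int j" and d=d] by simp
  qed
  from v_sum_nonzero[OF nv _ ex this] s show False by simp
qed






lemma frob_ring:
  fixes a b :: "'b::comm_ring_1"
  assumes pr: "prime (p::nat)" and ch: "of_nat p = (0::'b)"
  shows "(a + b) ^ (p ^ m) = a ^ (p ^ m) + b ^ (p ^ m)"
proof -
  let ?N = "p ^ m"
  have N0: "0 < ?N" using pr by (simp add: prime_gt_0_nat)
  have z: "(of_nat (?N choose k) :: 'b) = 0" if k0: "0 < k" and kN: "k < ?N" for k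
  proof -
    obtain q where "(?N choose k) = p * q" using prime_dvd_choose_pow[OF pr k0 kN] by (auto elim!: dvdE)
    thus ?thesis using ch by simp
  qed
  have "(a + b) ^ ?N = (\<Sum>k\<le>?N. of_nat (?N choose k) * a ^ k * b ^ (?N - k))"
    by (rule binomial_ring)
  also have "\<dots> = (\<Sum>k\<le>?N. (if k = 0 then b ^ ?N else 0) + (if k = ?N then a ^ ?N else 0))"
  proof (rule sum.cong[OF refl])
    fix k assume k: "k \<in> {..?N}"
    show "of_nat (?N choose k) * a ^ k * b ^ (?N - k) = (if k = 0 then b ^ ?N else 0) + (if k = ?N then a ^ ?N else 0)"
    proof (cases "k = 0")
      case True then show ?thesis using prime_gt_0_nat[OF pr] by simp
    next
      case False
      show ?thesis
      proof (cases "k = ?N")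
        case True then show ?thesis using False prime_gt_0_nat[OF pr] by simp
      next
        case False2: False
        hence "k < ?N" using k by auto
        then show ?thesis using z[of k] False False2 by simp
      qed
    qed
  qed
  also have "\<dots> = b ^ ?N + a ^ ?N" by (simp add: sum.distrib)
  finally show ?thesis by (simp add: add.commute)
qed

lemma frob_neg:
  fixes b :: "'b::comm_ring_1"
  assumes pr: "prime (p::nat)" and ch: "of_nat p = (0::'b)"
  shows "(- b) ^ (p ^ m) = - (b ^ (p ^ m))"
proof -
  have N0: "0 < p ^ m" using pr by (simp add: prime_gt_0_nat)
  have "(b + (- b)) ^ (p ^ m) = b ^ (p ^ m) + (- b) ^ (p ^ m)" by (rule frob_ring[OF pr ch])
  hence "0 = b ^ (p ^ m) + (- b) ^ (p ^ m)" using zero_power[OF N0, where 'a='b] by simp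
  thus ?thesis by (simp add: eq_neg_iff_add_eq_0 add.commute)
qed

lemma linear_pow_char:
  fixes x :: "'a::field"
  assumes pr: "prime (p::nat)" and ch: "of_nat p = (0::'a)"
  shows "[:- x, 1:] ^ (p ^ m) = monom 1 (p ^ m) - [:x ^ (p ^ m):]"
proof -
  have chp: "of_nat p = (0::'a poly)" using ch by (simp add: of_nat_poly)
  have e: "[:- x, 1:] = monom 1 1 + (- [:x:])" by (simp add: monom_Suc monom_0)
  have "[:- x, 1:] ^ (p ^ m) = monom 1 1 ^ (p ^ m) + (- [:x:]) ^ (p ^ m)"
    unfolding e by (rule frob_ring[OF pr chp])
  also have "(- [:x:]) ^ (p ^ m) = - ([:x:] ^ (p ^ m))" by (rule frob_neg[OF pr chp])
  finally show ?thesis by (simp add: monom_power poly_const_pow)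
qed

definition Kpoly :: "'a::field set \<Rightarrow> 'a poly \<Rightarrow> bool" where
  "Kpoly K f \<longleftrightarrow> (\<forall>i. coeff f i \<in> K)"

lemma Kpoly_div:
  fixes K :: "'a::field set"
  assumes sf: "is_subfield K" and g: "Kpoly K g" "lead_coeff g = 1" "0 < degree g"
  shows "Kpoly K f \<Longrightarrow> \<exists>q r. Kpoly K r \<and> f = q * g + r \<and> degree r < degree g"
proof (induction "degree f" arbitrary: f rule: less_induct)
  case less
  show ?case
  proof (cases "degree f < degree g")
    case True
    then show ?thesis using less.prems by (intro exI[of _ 0] exI[of _ f]) simp
  next
    case False
    define k where "k = degree f - degree g"
    define c where "c = lead_coeff f"
    define f' where "f' = f - monom c k * g"
    have cK: "c \<in> K" using less.prems by (simp add: c_def Kpoly_def)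
    have Kf': "Kpoly K f'"
      using less.prems g(1) cK unfolding Kpoly_def f'_def
      by (auto simp: coeff_monom_mult intro!: Ksub[OF sf] Kmult[OF sf] K0[OF sf])
    have df: "degree f = k + degree g" using False by (simp add: k_def)
    have "\<forall>i>degree f - 1. coeff f' i = 0"
    proof (intro allI impI)
      fix i assume i: "i > degree f - 1"
      show "coeff f' i = 0"
      proof (cases "i = degree f")
        case True
        then show ?thesis using g(2) df by (simp add: f'_def coeff_monom_mult c_def)
      next
        case False
        hence i2: "i > degree f" using i by auto
        hence "coeff f i = 0" by (simp add: coeff_eq_0)
        moreover have "coeff g (i - k) = 0" using i2 df by (intro coeff_eq_0) simp
        ultimately show ?thesis using i2 df by (simp add: f'_def coeff_monom_mult)
      qed
    qed
    hence "degree f' \<le> degree f - 1" by (rule degree_le)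
    moreover have "degree f > 0" using False g(3) by simp
    ultimately have "degree f' < degree f" by simp
    then obtain q r where qr: "Kpoly K r" "f' = q * g + r" "degree r < degree g"
      using less.hyps Kf' by blast
    have "f = (q + monom c k) * g + r" using qr(2) by (simp add: f'_def algebra_simps)
    then show ?thesis using qr(1,3) by blast
  qed
qed





lemma lin_power_factor:
  fixes pi :: "'a::field"
  shows "F * U = [:- pi, 1:] ^ k \<Longrightarrow> \<exists>c j. F = smult c ([:- pi, 1:] ^ j)"
proof (induction k arbitrary: F U)
  case 0
  hence "F \<noteq> 0" "U \<noteq> 0" by auto
  hence "degree F + degree U = 0" using degree_mult_eq[of F U] 0 by simp
  hence "degree F = 0" by simp
  then obtain c where "F = [:c:]" by (metis degree_eq_zeroE)
  then show ?case by (intro exI[of _ c] exI[of _ 0]) simp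
next
  case (Suc k)
  let ?l = "[:- pi, 1:]"
  have "poly (F * U) pi = 0" using Suc.prems by simp
  hence "poly F pi = 0 \<or> poly U pi = 0" by simp
  thus ?case
  proof
    assume "poly F pi = 0"
    then obtain F' where F': "F = ?l * F'" using poly_eq_0_iff_dvd by (metis dvdE)
    have "?l * (F' * U) = F * U" by (simp only: F' mult.assoc)
    also have "\<dots> = ?l * ?l ^ k" using Suc.prems by (simp only: power_Suc)
    finally have "F' * U = ?l ^ k" using mult_left_cancel[of ?l] by simp
    then obtain c j where "F' = smult c (?l ^ j)" using Suc.IH by blast
    hence "F = smult c (?l ^ Suc j)" using F' by (simp add: mult_smult_right)
    thus ?case by blast
  next
    assume "poly U pi = 0"
    then obtain U' where U': "U = ?l * U'" using poly_eq_0_iff_dvd by (metis dvdE)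
    have "?l * (F * U') = F * U" by (simp only: U' ac_simps)
    also have "\<dots> = ?l * ?l ^ k" using Suc.prems by (simp only: power_Suc)
    finally have "F * U' = ?l ^ k" using mult_left_cancel[of ?l] by simp
    thus ?case using Suc.IH by blast
  qed
qed

lemma pi_pow_K:
  fixes K :: "'a::field set" and pi :: 'a
  assumes pr: "prime p" and ch: "of_nat p = (0::'a)"
    and sf: "is_subfield K" and nv: "normalized_discrete_valuation v"
    and tr: "totally_ramified_index v K (p ^ n)"
    and ext: "ext_degree_eq K (p ^ n)"
    and pis: "purely_inseparable K p"
    and pi: "pi \<noteq> 0" "v pi = 1"
  shows "pi ^ (p ^ n) \<in> K"
proof -
  define d where "d = p ^ n"
  have d0: "0 < d" using pr by (simp add: d_def prime_gt_0_nat)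
  have indep: "\<forall>a. (\<forall>j<d. a j \<in> K) \<longrightarrow> (\<Sum>j<d. a j * pi ^ j) = 0 \<longrightarrow> (\<forall>j<d. a j = 0)"
  proof (rule allI, rule impI, rule impI)
    fix a :: "nat \<Rightarrow> 'a" assume "\<forall>j<d. a j \<in> K" "(\<Sum>j<d. a j * pi ^ j) = 0"
    then show "\<forall>j<d. a j = 0" using pow_indep[OF nv tr[folded d_def] pi(1)] pi(2) by simp
  qed
  obtain a where aK: "\<forall>j<d. a j \<in> K" and ad: "pi ^ d = (\<Sum>j<d. a j * pi ^ j)"
    using span_lemma[OF sf ext[folded d_def] indep, of "pi ^ d"] by blast
  obtain M where M: "pi ^ (p ^ M) \<in> K" using pis unfolding purely_inseparable_def by blast
  define N where "N = p ^ M"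
  define g where "g = Polynomial.monom 1 d - (\<Sum>j<d. Polynomial.monom (a j) j)"
  have cg: "coeff g i = (if i = d then 1 else if i < d then - a i else 0)" for i
  proof -
    have "coeff (\<Sum>j<d. Polynomial.monom (a j) j) i = (\<Sum>j<d. if j = i then a j else 0)"
      by (simp add: coeff_sum coeff_monom)
    also have "\<dots> = (if i < d then a i else 0)" by (simp add: sum.delta)
    finally show ?thesis by (auto simp: g_def coeff_monom)
  qed
  have Kg: "Kpoly K g" unfolding Kpoly_def cg using aK by (auto intro: K0[OF sf] K1[OF sf] Kneg[OF sf])
  have dg: "degree g = d"
  proof (rule antisym)
    show "degree g \<le> d" by (rule degree_le) (simp add: cg)
    show "d \<le> degree g" by (rule le_degree) (simp add: cg)
  qed
  have lg: "lead_coeff g = 1" using dg cg by simp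
  have pg: "poly g pi = 0"
    using ad by (simp add: g_def poly_sum poly_monom)
  define h where "h = [:- pi, 1:] ^ N"
  have h2: "h = Polynomial.monom 1 N - [:pi ^ N:]" unfolding h_def N_def by (rule linear_pow_char[OF pr ch])
  have Kh: "Kpoly K h" unfolding Kpoly_def
  proof
    fix i
    show "coeff h i \<in> K" unfolding h2
      using M by (cases i) (auto simp: coeff_monom N_def intro!: Ksub[OF sf] K0[OF sf] K1[OF sf] Kneg[OF sf])
  qed
  have ex: "\<exists>q r. Kpoly K r \<and> h = q * g + r \<and> degree r < degree g"
    by (rule Kpoly_div[OF sf Kg lg]) (use dg d0 Kh in simp_all)
  then obtain q r where qr: "Kpoly K r" "h = q * g + r" "degree r < degree g" by blast
  have ph: "poly h pi = 0" using pr by (simp add: h_def N_def prime_gt_0_nat)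
  have pr0: "poly r pi = 0" using ph pg qr(2) by simp
  have "poly r pi = (\<Sum>i<d. coeff r i * pi ^ i)"
  proof -
    have "poly r pi = (\<Sum>i\<le>degree r. coeff r i * pi ^ i)" by (rule poly_altdef)
    also have "\<dots> = (\<Sum>i<d. coeff r i * pi ^ i)"
    proof (rule sum.mono_neutral_left)
      show "{..degree r} \<subseteq> {..<d}" using qr(3) dg by auto
      show "\<forall>i\<in>{..<d} - {..degree r}. coeff r i * pi ^ i = 0" by (auto simp: coeff_eq_0)
    qed simp
    finally show ?thesis .
  qed
  hence "\<forall>i<d. coeff r i = 0" using indep qr(1) pr0 unfolding Kpoly_def by simp
  hence r0: "r = 0"
    by (intro poly_eqI) (metis coeff_0 coeff_eq_0 dg leI less_le_trans qr(3))
  have gdvd: "g dvd [:- pi, 1:] ^ N" using qr(2) r0 by (simp add: h_def)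
  obtain U where "[:- pi, 1:] ^ N = g * U" using gdvd by (elim dvdE)
  then obtain c m where cm: "g = smult c ([:- pi, 1:] ^ m)" using lin_power_factor[of g U pi N] by metis
  have "lead_coeff g = c" unfolding cm lead_coeff_smult lead_coeff_power by simp
  hence c1: "c = 1" using lg by simp
  hence gm: "g = [:- pi, 1:] ^ m" using cm by simp
  hence "m = d" using dg degree_linear_power[of "- pi" m] by simp
  hence "g = Polynomial.monom 1 d - [:pi ^ d:]" using gm linear_pow_char[OF pr ch, of pi n] by (simp add: d_def)
  hence "coeff g 0 = - (pi ^ d)" using d0 by (simp add: coeff_monom)
  hence "pi ^ d = a 0" using cg[of 0] d0 by simp
  thus ?thesis using aK d0 by (simp add: d_def)
qed





lemma K_linear_sum:
  assumes "K_linear K f" "\<And>k. k \<in> S \<Longrightarrow> c k \<in> K"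
  shows "f (\<Sum>k\<in>S. c k * z k) = (\<Sum>k\<in>S. c k * f (z k))"
  using assms(2)
proof (induction S rule: infinite_finite_induct)
  case (infinite A) 
  have "f 0 = 0" using assms(1) unfolding K_linear_def by (metis add_cancel_right_right)
  then show ?case using infinite by simp
next
  case empty
  have "f 0 = 0" using assms(1) unfolding K_linear_def by (metis add_cancel_right_right)
  then show ?case by simp
next
  case (insert a A)
  have "f (\<Sum>k\<in>insert a A. c k * z k) = f (c a * z a + (\<Sum>k\<in>A. c k * z k))" using insert.hyps by simp
  also have "\<dots> = c a * f (z a) + f (\<Sum>k\<in>A. c k * z k)"
    using assms(1) insert.prems unfolding K_linear_def by simp
  also have "\<dots> = (\<Sum>k\<in>insert a A. c k * f (z k))" using insert by simp
  finally show ?case .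
qed

lemma sum_delta_mult:
  fixes F :: "nat \<Rightarrow> 'b::comm_ring_1"
  shows "k < d \<Longrightarrow> (\<Sum>j<d. (if j = k then 1 else 0) * F j) = F k"
proof -
  assume k: "k < d"
  have "(\<Sum>j<d. (if j = k then 1 else 0) * F j) = (\<Sum>j<d. if j = k then F j else 0)"
    by (rule sum.cong) simp_all
  also have "\<dots> = F k" using k by (simp add: sum.delta)
  finally show ?thesis .
qed

lemma K_linear_zero: "K_linear K f \<Longrightarrow> f 0 = 0"
  unfolding K_linear_def by (metis add_cancel_right_right)

locale hg =
  fixes K :: "'a::field set" and p n :: nat and x :: 'a
  assumes sf: "is_subfield K" and pr: "prime p" and ch: "of_nat p = (0::'a)"
    and x0: "x \<noteq> 0" and xd: "x ^ (p ^ n) \<in> K"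
    and indep: "\<forall>a. (\<forall>j<p ^ n. a j \<in> K) \<longrightarrow> (\<Sum>j<p ^ n. a j * x ^ j) = 0 \<longrightarrow> (\<forall>j<p ^ n. a j = 0)"
    and span: "\<forall>y. \<exists>a. (\<forall>j<p ^ n. a j \<in> K) \<and> y = (\<Sum>j<p ^ n. a j * x ^ j)"
begin

abbreviation "d \<equiv> p ^ n"

lemma d0: "0 < d" using pr by (simp add: prime_gt_0_nat)

definition co :: "'a \<Rightarrow> nat \<Rightarrow> 'a" where
  "co y = (SOME a. (\<forall>j. a j \<in> K) \<and> (\<forall>j\<ge>d. a j = 0) \<and> y = (\<Sum>j<d. a j * x ^ j))"

lemma co_ex: "\<exists>a. (\<forall>j. a j \<in> K) \<and> (\<forall>j\<ge>d. a j = 0) \<and> y = (\<Sum>j<d. a j * x ^ j)"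
proof -
  obtain a where a: "\<forall>j<d. a j \<in> K" "y = (\<Sum>j<d. a j * x ^ j)" using span by blast
  define b where "b j = (if j < d then a j else 0)" for j
  have "\<forall>j. b j \<in> K" using a(1) K0[OF sf] by (simp add: b_def)
  moreover have "\<forall>j\<ge>d. b j = 0" by (simp add: b_def)
  moreover have "y = (\<Sum>j<d. b j * x ^ j)" using a(2) by (simp add: b_def)
  ultimately show ?thesis by (intro exI[of _ b]) simp
qed

lemma co_prop: "(\<forall>j. co y j \<in> K) \<and> (\<forall>j\<ge>d. co y j = 0) \<and> y = (\<Sum>j<d. co y j * x ^ j)"
  unfolding co_def by (rule someI_ex[OF co_ex])

lemma coK: "co y j \<in> K" using co_prop by blast
lemma co_hi: "j \<ge> d \<Longrightarrow> co y j = 0" using co_prop by blast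
lemma co_eq: "y = (\<Sum>j<d. co y j * x ^ j)" using co_prop by blast

lemma co_unique:
  assumes "\<forall>j<d. b j \<in> K" "y = (\<Sum>j<d. b j * x ^ j)"
  shows "\<forall>j<d. co y j = b j"
proof -
  have "(\<Sum>j<d. (co y j - b j) * x ^ j) = (\<Sum>j<d. co y j * x ^ j) - (\<Sum>j<d. b j * x ^ j)"
    by (simp add: algebra_simps sum_subtractf)
  also have "\<dots> = 0" using assms(2) co_eq[of y] by simp
  finally have S0: "(\<Sum>j<d. (co y j - b j) * x ^ j) = 0" .
  have "\<forall>j<d. co y j - b j \<in> K" using assms(1) coK by (simp add: Ksub[OF sf])
  hence "\<forall>j<d. co y j - b j = 0"
    using indep[rule_format, of "\<lambda>j. co y j - b j"] S0 by blast
  thus ?thesis by simp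
qed

definition T :: "nat \<Rightarrow> 'a \<Rightarrow> 'a" where
  "T i y = (\<Sum>j<d. co y j * (of_nat (j choose i) * x ^ (j - i)))"

lemma co_add: "j < d \<Longrightarrow> co (y + z) j = co y j + co z j"
proof -
  assume j: "j < d"
  have "\<forall>j<d. co (y + z) j = co y j + co z j"
  proof (rule co_unique)
    show "\<forall>j<d. co y j + co z j \<in> K" using coK Kadd[OF sf] by blast
    show "y + z = (\<Sum>j<d. (co y j + co z j) * x ^ j)"
      using co_eq[of y] co_eq[of z] by (simp add: algebra_simps sum.distrib)
  qed
  thus ?thesis using j by blast
qed

lemma co_mult: "c \<in> K \<Longrightarrow> j < d \<Longrightarrow> co (c * y) j = c * co y j"
proof -
  assume c: "c \<in> K" and j: "j < d"
  have "\<forall>j<d. co (c * y) j = c * co y j"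
  proof (rule co_unique)
    show "\<forall>j<d. c * co y j \<in> K" using coK Kmult[OF sf] c by blast
    have "c * y = c * (\<Sum>j<d. co y j * x ^ j)" using co_eq[of y] by (rule arg_cong)
    thus "c * y = (\<Sum>j<d. c * co y j * x ^ j)" by (simp add: sum_distrib_left mult.assoc)
  qed
  thus ?thesis using j by blast
qed

lemma T_linear: "K_linear K (T i)"
  unfolding K_linear_def
proof (intro conjI allI ballI)
  fix y z show "T i (y + z) = T i y + T i z"
    unfolding T_def by (simp add: co_add algebra_simps sum.distrib)
next
  fix c y assume "c \<in> K" thus "T i (c * y) = c * T i y"
    unfolding T_def by (simp add: co_mult sum_distrib_left mult.assoc)
qed

lemma co_mono: "k < d \<Longrightarrow> j < d \<Longrightarrow> co (x ^ k) j = (if j = k then 1 else 0)"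
proof -
  assume k: "k < d" and j: "j < d"
  have "\<forall>j<d. co (x ^ k) j = (if j = k then 1 else 0)"
  proof (rule co_unique)
    show "\<forall>j<d. (if j = k then 1 else 0) \<in> K" using K0[OF sf] K1[OF sf] by simp
    show "x ^ k = (\<Sum>j<d. (if j = k then 1 else 0) * x ^ j)" using sum_delta_mult[OF k, of "\<lambda>j. x ^ j"] by simp
  qed
  thus ?thesis using j by blast
qed

lemma T_mono: "k < d \<Longrightarrow> T i (x ^ k) = of_nat (k choose i) * x ^ (k - i)"
proof -
  assume k: "k < d"
  have "T i (x ^ k) = (\<Sum>j<d. (if j = k then 1 else 0) * (of_nat (j choose i) * x ^ (j - i)))"
    unfolding T_def by (rule sum.cong) (auto simp: co_mono k)
  also have "\<dots> = of_nat (k choose i) * x ^ (k - i)" using sum_delta_mult[OF k, of "\<lambda>j. of_nat (j choose i) * x ^ (j - i)"] by simp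
  finally show ?thesis .
qed

lemma T_gen: "i < d \<Longrightarrow> T i (x ^ m) = of_nat (m choose i) * x ^ (m - i)"
proof -
  assume i: "i < d"
  define q m0 where "q = m div d" and "m0 = m mod d"
  have m: "m = q * d + m0" unfolding q_def m0_def by (rule div_mult_mod_eq[symmetric])
  have m0: "m0 < d" using d0 by (simp add: m0_def)
  have "x ^ m = (x ^ d) ^ q * x ^ m0" unfolding m power_add power_mult[symmetric] by (simp add: mult.commute)
  hence "T i (x ^ m) = (x ^ d) ^ q * T i (x ^ m0)"
    using T_linear[of i] Kpow[OF sf xd] unfolding K_linear_def by simp
  also have "\<dots> = (x ^ d) ^ q * (of_nat (m0 choose i) * x ^ (m0 - i))" by (simp add: T_mono m0)
  also have "\<dots> = of_nat (m choose i) * x ^ (m - i)"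
  proof (cases "i \<le> m0")
    case True
    have "x ^ (m - i) = (x ^ d) ^ q * x ^ (m0 - i)"
    proof -
      have "m - i = d * q + (m0 - i)" using True by (simp add: m mult.commute)
      thus ?thesis by (simp only: power_add power_mult)
    qed
    moreover have "(of_nat (m choose i) :: 'a) = of_nat (m0 choose i)"
      using ofnat_choose_shift[OF pr ch i, of q m0] by (simp add: m)
    ultimately show ?thesis by simp
  next
    case False
    have "(of_nat (m choose i) :: 'a) = of_nat (m0 choose i)"
      using ofnat_choose_shift[OF pr ch i, of q m0] by (simp add: m)
    thus ?thesis using False by (simp add: binomial_eq_0)
  qed
  finally show ?thesis .
qed

end




lemma choose_comp_nat: "(k choose j) * ((k - j) choose i) = ((i + j) choose j) * (k choose (i + j))"
proof (cases "i + j \<le> k")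
  case True
  have "(k choose (i + j)) * ((i + j) choose j) = (k choose j) * ((k - j) choose (i + j - j))"
    using choose_mult[of j "i + j" k] True by simp
  thus ?thesis by (simp add: mult.commute)
next
  case False
  thus ?thesis by (cases "j \<le> k") (auto simp: binomial_eq_0)
qed

lemma mono_leibniz:
  fixes x :: "'a::field"
  shows "(\<Sum>j\<le>r. of_nat (a choose j) * of_nat (b choose (r - j)) * (x ^ (a - j) * x ^ (b - (r - j))))
         = of_nat ((a + b) choose r) * x ^ (a + b - r)"
proof -
  have "(\<Sum>j\<le>r. of_nat (a choose j) * of_nat (b choose (r - j)) * (x ^ (a - j) * x ^ (b - (r - j))))
      = (\<Sum>j\<le>r. of_nat ((a choose j) * (b choose (r - j))) * x ^ (a + b - r))"
  proof (rule sum.cong[OF refl])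
    fix j assume j: "j \<in> {..r}"
    show "of_nat (a choose j) * of_nat (b choose (r - j)) * (x ^ (a - j) * x ^ (b - (r - j)))
          = of_nat ((a choose j) * (b choose (r - j))) * x ^ (a + b - r)"
    proof (cases "j \<le> a \<and> r - j \<le> b")
      case True
      hence "a - j + (b - (r - j)) = a + b - r" using j by auto
      hence "x ^ (a - j) * x ^ (b - (r - j)) = x ^ (a + b - r)" by (metis power_add)
      thus ?thesis by simp
    next
      case False
      thus ?thesis by (auto simp: binomial_eq_0)
    qed
  qed
  also have "\<dots> = of_nat (\<Sum>j\<le>r. (a choose j) * (b choose (r - j))) * x ^ (a + b - r)"
    by (simp only: of_nat_sum sum_distrib_right)
  also have "\<dots> = of_nat ((a + b) choose r) * x ^ (a + b - r)" by (simp only: vandermonde)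
  finally show ?thesis .
qed

context hg
begin

lemma T_alt: "T i y = (\<Sum>k<d. (co y k * of_nat (k choose i)) * x ^ (k - i))"
  unfolding T_def by (simp add: mult.assoc)

lemma T_comp_gen: "T i (T j y) = of_nat ((i + j) choose j) * (\<Sum>k<d. co y k * (of_nat (k choose (i + j)) * x ^ (k - (i + j))))"
proof -
  have "T i (T j y) = (\<Sum>k<d. (co y k * of_nat (k choose j)) * T i (x ^ (k - j)))"
    unfolding T_alt[of j y] by (rule K_linear_sum[OF T_linear]) (auto intro: Kmult[OF sf] coK Kofnat[OF sf])
  also have "\<dots> = (\<Sum>k<d. of_nat ((i + j) choose j) * (co y k * (of_nat (k choose (i + j)) * x ^ (k - (i + j)))))"
  proof (rule sum.cong[OF refl])
    fix k assume "k \<in> {..<d}"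
    hence "k - j < d" by auto
    hence "T i (x ^ (k - j)) = of_nat ((k - j) choose i) * x ^ (k - j - i)" by (rule T_mono)
    moreover have "(of_nat (k choose j) :: 'a) * of_nat ((k - j) choose i) = of_nat ((i + j) choose j) * of_nat (k choose (i + j))"
      using choose_comp_nat[of k j i] by (metis of_nat_mult)
    moreover have "k - j - i = k - (i + j)" by simp
    ultimately show "(co y k * of_nat (k choose j)) * T i (x ^ (k - j)) = of_nat ((i + j) choose j) * (co y k * (of_nat (k choose (i + j)) * x ^ (k - (i + j))))"
      by (simp add: algebra_simps)
  qed
  also have "\<dots> = of_nat ((i + j) choose j) * (\<Sum>k<d. co y k * (of_nat (k choose (i + j)) * x ^ (k - (i + j))))"
    by (simp add: sum_distrib_left)
  finally show ?thesis .
qed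

lemma T_comp: "T i (T j y) = (if i + j < d then of_nat ((i + j) choose j) * T (i + j) y else 0)"
proof (cases "i + j < d")
  case True
  then show ?thesis using T_comp_gen[of i j y] by (simp add: T_def)
next
  case False
  have "(\<Sum>k<d. co y k * (of_nat (k choose (i + j)) * x ^ (k - (i + j)))) = (\<Sum>k<d. (0::'a))"
    by (rule sum.cong[OF refl]) (use False in \<open>auto simp: binomial_eq_0\<close>)
  then show ?thesis using T_comp_gen[of i j y] False by simp
qed

lemma T0: "T 0 y = y"
  unfolding T_def using co_eq[of y] by simp

lemma T_one: "T r 1 = (if r = 0 then 1 else 0)"
proof -
  have "T r (x ^ 0) = of_nat (0 choose r) * x ^ (0 - r)" using d0 by (rule T_mono)
  thus ?thesis by (cases r) auto
qed

lemma T_leibniz: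
  assumes r: "r < d"
  shows "T r (s * t) = (\<Sum>j\<le>r. T j s * T (r - j) t)"
proof -
  have st: "s * t = (\<Sum>a<d. co s a * (x ^ a * t))"
    using co_eq[of s] by (metis (no_types, lifting) sum_distrib_right sum.cong mult.assoc)
  have xt: "x ^ a * t = (\<Sum>b<d. co t b * x ^ (a + b))" for a
  proof -
    have "x ^ a * t = x ^ a * (\<Sum>b<d. co t b * x ^ b)" using co_eq[of t] by (rule arg_cong)
    thus ?thesis by (simp add: sum_distrib_left power_add algebra_simps)
  qed
  have "T r (s * t) = (\<Sum>a<d. co s a * T r (x ^ a * t))"
    unfolding st by (rule K_linear_sum[OF T_linear]) (rule coK)
  also have "\<dots> = (\<Sum>a<d. co s a * (\<Sum>b<d. co t b * (of_nat ((a + b) choose r) * x ^ (a + b - r))))"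
  proof (rule sum.cong[OF refl])
    fix a
    have "T r (x ^ a * t) = (\<Sum>b<d. co t b * T r (x ^ (a + b)))"
      unfolding xt by (rule K_linear_sum[OF T_linear]) (rule coK)
    also have "\<dots> = (\<Sum>b<d. co t b * (of_nat ((a + b) choose r) * x ^ (a + b - r)))"
      by (simp add: T_gen r)
    finally show "co s a * T r (x ^ a * t) = co s a * (\<Sum>b<d. co t b * (of_nat ((a + b) choose r) * x ^ (a + b - r)))" by simp
  qed
  also have "\<dots> = (\<Sum>a<d. \<Sum>b<d. co s a * co t b * (of_nat ((a + b) choose r) * x ^ (a + b - r)))"
    by (simp add: sum_distrib_left mult.assoc)
  also have "\<dots> = (\<Sum>a<d. \<Sum>b<d. co s a * co t b * (\<Sum>j\<le>r. of_nat (a choose j) * of_nat (b choose (r - j)) * (x ^ (a - j) * x ^ (b - (r - j)))))"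
  proof (rule sum.cong[OF refl], rule sum.cong[OF refl])
    fix a b
    show "co s a * co t b * (of_nat ((a + b) choose r) * x ^ (a + b - r)) = co s a * co t b * (\<Sum>j\<le>r. of_nat (a choose j) * of_nat (b choose (r - j)) * (x ^ (a - j) * x ^ (b - (r - j))))"
      by (simp only: mono_leibniz)
  qed
  also have "\<dots> = (\<Sum>j\<le>r. \<Sum>a<d. \<Sum>b<d. (co s a * (of_nat (a choose j) * x ^ (a - j))) * (co t b * (of_nat (b choose (r - j)) * x ^ (b - (r - j)))))"
  proof -
    have "(\<Sum>a<d. \<Sum>b<d. co s a * co t b * (\<Sum>j\<le>r. of_nat (a choose j) * of_nat (b choose (r - j)) * (x ^ (a - j) * x ^ (b - (r - j)))))
        = (\<Sum>a<d. \<Sum>b<d. \<Sum>j\<le>r. (co s a * (of_nat (a choose j) * x ^ (a - j))) * (co t b * (of_nat (b choose (r - j)) * x ^ (b - (r - j)))))"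
      by (simp add: sum_distrib_left algebra_simps)
    also have "\<dots> = (\<Sum>a<d. \<Sum>j\<le>r. \<Sum>b<d. (co s a * (of_nat (a choose j) * x ^ (a - j))) * (co t b * (of_nat (b choose (r - j)) * x ^ (b - (r - j)))))"
      by (rule sum.cong[OF refl], rule sum.swap)
    also have "\<dots> = (\<Sum>j\<le>r. \<Sum>a<d. \<Sum>b<d. (co s a * (of_nat (a choose j) * x ^ (a - j))) * (co t b * (of_nat (b choose (r - j)) * x ^ (b - (r - j)))))"
      by (rule sum.swap)
    finally show ?thesis .
  qed
  also have "\<dots> = (\<Sum>j\<le>r. T j s * T (r - j) t)"
    unfolding T_def by (simp add: sum_product)
  finally show ?thesis .
qed

end




context hg
begin

lemma sum_T_mono:
  assumes k: "k < d"
  shows "(\<Sum>i<d. s i * T i (x ^ k)) = (\<Sum>i<k. s i * (of_nat (k choose i) * x ^ (k - i))) + s k"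
proof -
  have "(\<Sum>i<d. s i * T i (x ^ k)) = (\<Sum>i<d. s i * (of_nat (k choose i) * x ^ (k - i)))"
    by (rule sum.cong[OF refl]) (simp add: T_mono k)
  also have "\<dots> = (\<Sum>i<Suc k. s i * (of_nat (k choose i) * x ^ (k - i)))"
  proof (rule sum.mono_neutral_right)
    show "{..<Suc k} \<subseteq> {..<d}" using k by auto
    show "\<forall>i\<in>{..<d} - {..<Suc k}. s i * (of_nat (k choose i) * x ^ (k - i)) = 0" by (auto simp: binomial_eq_0)
  qed simp
  also have "\<dots> = (\<Sum>i<k. s i * (of_nat (k choose i) * x ^ (k - i))) + s k" by simp
  finally show ?thesis .
qed

lemma ex_s: "\<exists>s. \<forall>k\<le>N. f (x ^ k) = (\<Sum>i<k. s i * (of_nat (k choose i) * x ^ (k - i))) + s k"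
proof (induction N)
  case 0
  show ?case by (intro exI[of _ "\<lambda>_. f 1"]) simp
next
  case (Suc N)
  then obtain s where s: "\<forall>k\<le>N. f (x ^ k) = (\<Sum>i<k. s i * (of_nat (k choose i) * x ^ (k - i))) + s k" by blast
  define s' where "s' = s(Suc N := f (x ^ Suc N) - (\<Sum>i<Suc N. s i * (of_nat (Suc N choose i) * x ^ (Suc N - i))))"
  have "\<forall>k\<le>Suc N. f (x ^ k) = (\<Sum>i<k. s' i * (of_nat (k choose i) * x ^ (k - i))) + s' k"
  proof (intro allI impI)
    fix k assume k: "k \<le> Suc N"
    show "f (x ^ k) = (\<Sum>i<k. s' i * (of_nat (k choose i) * x ^ (k - i))) + s' k"
    proof (cases "k = Suc N")
      case True
      have "(\<Sum>i<k. s' i * (of_nat (k choose i) * x ^ (k - i))) = (\<Sum>i<k. s i * (of_nat (k choose i) * x ^ (k - i)))"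
        by (rule sum.cong) (auto simp: s'_def True)
      then show ?thesis by (simp add: s'_def True)
    next
      case False
      hence kN: "k \<le> N" using k by simp
      have "(\<Sum>i<k. s' i * (of_nat (k choose i) * x ^ (k - i))) = (\<Sum>i<k. s i * (of_nat (k choose i) * x ^ (k - i)))"
        by (rule sum.cong) (use kN in \<open>auto simp: s'_def\<close>)
      moreover have "s' k = s k" using kN by (simp add: s'_def)
      ultimately show ?thesis using s kN by simp
    qed
  qed
  thus ?case by (intro exI[of _ s'])
qed

lemma T_surj:
  assumes f: "K_linear K f"
  shows "\<exists>s. \<forall>y. f y = (\<Sum>i<d. s i * T i y)"
proof -
  obtain s where s: "\<forall>k\<le>d - 1. f (x ^ k) = (\<Sum>i<k. s i * (of_nat (k choose i) * x ^ (k - i))) + s k"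
    using ex_s by blast
  have fk: "f (x ^ k) = (\<Sum>i<d. s i * T i (x ^ k))" if k: "k < d" for k
    using s k sum_T_mono[OF k, of s] by simp
  have "f y = (\<Sum>i<d. s i * T i y)" for y
  proof -
    have "f y = f (\<Sum>k<d. co y k * x ^ k)" using co_eq[of y] by (rule arg_cong)
    also have "\<dots> = (\<Sum>k<d. co y k * f (x ^ k))" by (rule K_linear_sum[OF f]) (rule coK)
    also have "\<dots> = (\<Sum>k<d. co y k * (\<Sum>i<d. s i * T i (x ^ k)))"
      by (rule sum.cong[OF refl]) (simp add: fk)
    also have "\<dots> = (\<Sum>k<d. \<Sum>i<d. s i * (co y k * T i (x ^ k)))"
      by (simp add: sum_distrib_left algebra_simps)
    also have "\<dots> = (\<Sum>i<d. \<Sum>k<d. s i * (co y k * T i (x ^ k)))"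
      by (rule sum.swap)
    also have "\<dots> = (\<Sum>i<d. s i * (\<Sum>k<d. co y k * T i (x ^ k)))"
      by (simp add: sum_distrib_left)
    also have "\<dots> = (\<Sum>i<d. s i * T i y)"
    proof (rule sum.cong[OF refl])
      fix i
      have "T i y = T i (\<Sum>k<d. co y k * x ^ k)" using co_eq[of y] by (rule arg_cong)
      also have "\<dots> = (\<Sum>k<d. co y k * T i (x ^ k))" by (rule K_linear_sum[OF T_linear]) (rule coK)
      finally show "s i * (\<Sum>k<d. co y k * T i (x ^ k)) = s i * T i y" by simp
    qed
    finally show ?thesis .
  qed
  thus ?thesis by (intro exI[of _ s]) blast
qed

lemma T_inj:
  assumes eq: "\<forall>y. (\<Sum>i<d. s i * T i y) = (\<Sum>i<d. s' i * T i y)"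
  shows "\<forall>i<d. s i = s' i"
proof -
  have "k < d \<longrightarrow> s k = s' k" for k
  proof (induction k rule: less_induct)
    case (less k)
    show ?case
    proof
      assume k: "k < d"
      have "(\<Sum>i<k. s i * (of_nat (k choose i) * x ^ (k - i))) = (\<Sum>i<k. s' i * (of_nat (k choose i) * x ^ (k - i)))"
        by (rule sum.cong[OF refl]) (use less.IH k in auto)
      moreover have "(\<Sum>i<k. s i * (of_nat (k choose i) * x ^ (k - i))) + s k = (\<Sum>i<k. s' i * (of_nat (k choose i) * x ^ (k - i))) + s' k"
        using eq[rule_format, of "x ^ k"] sum_T_mono[OF k, of s] sum_T_mono[OF k, of s'] by simp
      ultimately show "s k = s' k" by simp
    qed
  qed
  thus ?thesis by blast
qed

lemma hopf_galois: "An_hopf_galois K p n T"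
  unfolding An_hopf_galois_def An_module_algebra_def An_action_def
proof (intro conjI allI impI)
  show "\<And>i. i < d \<Longrightarrow> K_linear K (T i)" by (rule T_linear)
  show "\<And>y. T 0 y = y" by (rule T0)
  show "\<And>i j y. i < d \<Longrightarrow> j < d \<Longrightarrow> T i (T j y) = (if i + j < d then of_nat ((i + j) choose j) * T (i + j) y else 0)"
    by (rule T_comp)
  show "\<And>r s t. r < d \<Longrightarrow> T r (s * t) = (\<Sum>j\<le>r. T j s * T (r - j) t)" by (rule T_leibniz)
  show "\<And>r. r < d \<Longrightarrow> T r 1 = (if r = 0 then 1 else 0)" by (rule T_one)
  show "\<And>f. K_linear K f \<Longrightarrow> \<exists>s. \<forall>y. f y = (\<Sum>i<d. s i * T i y)" by (rule T_surj)
  show "\<And>s s' i. \<forall>y. (\<Sum>i<d. s i * T i y) = (\<Sum>i<d. s' i * T i y) \<Longrightarrow> i < d \<Longrightarrow> s i = s' i"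
    using T_inj by blast
qed

end




lemma digit_sum: "(\<Sum>k<n. digit p k s * p ^ k) = s mod p ^ n"
proof (induction n)
  case 0 then show ?case by simp
next
  case (Suc n)
  have "s mod p ^ Suc n = p ^ n * (s div p ^ n mod p) + s mod p ^ n"
    using mod_mult2_eq[of s "p ^ n" p] by (simp add: mult.commute)
  then show ?case using Suc by (simp add: digit_def mult.commute)
qed

lemma frak_b_const:
  assumes "s < p ^ n"
  shows "frak_b p n (\<lambda>_. b) s = b * int s"
proof -
  have "frak_b p n (\<lambda>_. b) s = (\<Sum>i=1..n. int (digit p (n - i) s) * int (p ^ (n - i)) * b)"
    by (simp add: frak_b_def)
  also have "\<dots> = (\<Sum>k<n. int (digit p k s) * int (p ^ k) * b)"
    by (rule sum.reindex_bij_witness[of _ "\<lambda>k. n - k" "\<lambda>i. n - i"]) auto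
  also have "\<dots> = b * int (\<Sum>k<n. digit p k s * p ^ k)"
    by (simp add: sum_distrib_left algebra_simps)
  also have "\<dots> = b * int s" using assms by (simp add: digit_sum)
  finally show ?thesis .
qed

context
  fixes p n :: nat and b :: int
  assumes pr: "prime p" and cop: "coprime b (int p)"
begin

lemma copd: "coprime b (int (p ^ n))" using cop by simp

lemma fa_unique_aux:
  assumes "s1 < p ^ n" "s2 < p ^ n" "(b * int s1) mod int (p ^ n) = (b * int s2) mod int (p ^ n)"
  shows "s1 = s2"
proof -
  have "int (p ^ n) dvd b * int s1 - b * int s2" using assms(3) by (simp add: mod_eq_dvd_iff)
  hence "int (p ^ n) dvd b * (int s1 - int s2)" by (simp add: algebra_simps)
  hence "int (p ^ n) dvd (int s1 - int s2)"
    using copd coprime_dvd_mult_right_iff[of "int (p ^ n)" b "int s1 - int s2"] by (simp add: coprime_commute)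
  moreover have "\<bar>int s1 - int s2\<bar> < int (p ^ n)" using assms(1,2) by linarith
  ultimately have "int s1 - int s2 = 0" using small_dvd_zero[where d="p ^ n" and x="int s1 - int s2"] by simp
  thus ?thesis by simp
qed

lemma fa_exists: "\<exists>s. s < p ^ n \<and> (b * int s) mod int (p ^ n) = (- t) mod int (p ^ n)"
proof -
  obtain u v where uv: "u * b + v * int (p ^ n) = gcd b (int (p ^ n))" using bezout_int by blast
  hence uv1: "u * b + v * int (p ^ n) = 1" using copd by simp
  have d0: "int (p ^ n) > 0" using pr by (simp add: prime_gt_0_nat)
  define s where "s = nat ((- t * u) mod int (p ^ n))"
  have si: "int s = (- t * u) mod int (p ^ n)" using d0 by (simp add: s_def)
  have "s < p ^ n" using d0 si by (metis of_nat_less_iff pos_mod_bound)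
  moreover have "(b * int s) mod int (p ^ n) = (- t) mod int (p ^ n)"
  proof -
    have "(b * int s) mod int (p ^ n) = (b * (- t * u)) mod int (p ^ n)"
      unfolding si by (simp add: mod_mult_right_eq)
    also have "b * (- t * u) = - t * (1 - v * int (p ^ n))"
    proof -
      have "b * (- t * u) = - t * (u * b)" by (simp add: algebra_simps)
      also have "u * b = 1 - v * int (p ^ n)" using uv1 by simp
      finally show ?thesis .
    qed
    also have "(- t * (1 - v * int (p ^ n))) mod int (p ^ n) = (- t + (t * v) * int (p ^ n)) mod int (p ^ n)"
      by (simp add: algebra_simps)
    also have "\<dots> = (- t) mod int (p ^ n)" by (rule mod_mult_self1)
    finally show ?thesis .
  qed
  ultimately show ?thesis by blast
qed

lemma fa_prop: "frak_a p n (\<lambda>_. b) t < p ^ n \<and> (b * int (frak_a p n (\<lambda>_. b) t)) mod int (p ^ n) = (- t) mod int (p ^ n)"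
proof -
  obtain s where s: "s < p ^ n" "(b * int s) mod int (p ^ n) = (- t) mod int (p ^ n)" using fa_exists by blast
  have "frak_a p n (\<lambda>_. b) t = s"
    unfolding frak_a_def
  proof (rule the_equality)
    show "s < p ^ n \<and> frak_b p n (\<lambda>_. b) s mod int (p ^ n) = - t mod int (p ^ n)"
      using s frak_b_const[OF s(1)] by simp
    fix s' assume "s' < p ^ n \<and> frak_b p n (\<lambda>_. b) s' mod int (p ^ n) = - t mod int (p ^ n)"
    thus "s' = s" using s frak_b_const[of s' p n b] fa_unique_aux[of s' s] by auto
  qed
  thus ?thesis using s by simp
qed

lemma fa_unique: "s < p ^ n \<Longrightarrow> (b * int s) mod int (p ^ n) = (- t) mod int (p ^ n) \<Longrightarrow> frak_a p n (\<lambda>_. b) t = s"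
  using fa_prop[of t] fa_unique_aux[of "frak_a p n (\<lambda>_. b) t" s] by auto

end




lemma v_powi:
  assumes nv: "normalized_discrete_valuation v" and w: "w \<noteq> 0"
  shows "v (w powi k) = k * v w"
proof (cases "k \<ge> 0")
  case True
  then show ?thesis using w by (simp add: power_int_def v_power[OF nv])
next
  case False
  then show ?thesis using w by (simp add: power_int_def v_power[OF nv] v_inverse[OF nv])
qed

lemma v_ofnat_nonneg:
  assumes nv: "normalized_discrete_valuation v"
  shows "of_nat m \<noteq> (0::'a::field) \<Longrightarrow> v (of_nat m :: 'a) \<ge> 0"
proof (induction m)
  case 0 then show ?case by simp
next
  case (Suc m)
  show ?case
  proof (cases "of_nat m = (0::'a)")
    case True
    then show ?thesis by (simp add: v_one[OF nv])
  next
    case False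
    have ne: "(of_nat m :: 'a) + 1 \<noteq> 0" using Suc.prems by (simp add: add.commute)
    have "v ((of_nat m :: 'a) + 1) \<ge> min (v (of_nat m :: 'a)) (v 1)"
      using v_add[OF nv False one_neq_zero ne] .
    moreover have "v (of_nat (Suc m) :: 'a) = v ((of_nat m :: 'a) + 1)" by (simp add: add.commute)
    ultimately show ?thesis using Suc.IH[OF False] v_one[OF nv] by linarith
  qed
qed

lemma ofnat_unit:
  fixes p :: nat
  assumes pr: "prime p" and ch: "of_nat p = (0::'a::field)" and r: "0 < r" "r < p"
  shows "\<exists>y. (of_nat r :: 'a) * of_nat y = 1"
proof -
  have "\<not> p dvd r" using r by (auto dest: dvd_imp_le)
  hence "coprime p r" using pr by (simp add: prime_imp_coprime)
  hence g: "gcd r p = 1" by (simp add: coprime_iff_gcd_eq_1 gcd.commute)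
  obtain a c where "r * a = p * c + gcd r p" using bezout_nat[of r p] r by auto
  hence "r * a = p * c + 1" using g by simp
  hence "(of_nat (r * a) :: 'a) = of_nat (p * c + 1)" by simp
  hence "(of_nat r :: 'a) * of_nat a = 1" using ch by simp
  thus ?thesis by blast
qed

lemma ofnat_unit_v:
  fixes p :: nat
  assumes nv: "normalized_discrete_valuation v" and pr: "prime p" and ch: "of_nat p = (0::'a::field)"
    and r: "0 < r" "r < p"
  shows "(of_nat r :: 'a) \<noteq> 0 \<and> v (of_nat r :: 'a) = 0"
proof -
  obtain y where y: "(of_nat r :: 'a) * of_nat y = 1" using ofnat_unit[OF pr ch r] by blast
  hence nz: "(of_nat r :: 'a) \<noteq> 0" "(of_nat y :: 'a) \<noteq> 0" by auto
  have "v (of_nat r :: 'a) + v (of_nat y :: 'a) = 0" using v_mult[OF nv nz] y v_one[OF nv] by simp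
  moreover have "v (of_nat r :: 'a) \<ge> 0" "v (of_nat y :: 'a) \<ge> 0" using v_ofnat_nonneg[OF nv] nz by auto
  ultimately show ?thesis using nz by simp
qed

locale sc = hg +
  fixes v :: "'a \<Rightarrow> int" and b :: int and w :: 'a
  assumes nv: "normalized_discrete_valuation v" and cop: "coprime b (int p)"
    and vx: "v x = - b" and wK: "w \<in> K" and w0: "w \<noteq> 0" and vw: "v w = int (p ^ n)"
begin

definition "fa t = frak_a p n (\<lambda>_. b) t"
definition "ee t = (t + b * int (fa t)) div int d"
definition "lam t = x ^ fa t * w powi ee t"
definition "Psi i j = (if j = p ^ (n - i) then (1::'a) else 0)"

lemma fa_lt: "fa t < d" and fa_mod: "(b * int (fa t)) mod int d = (- t) mod int d"
  using fa_prop[OF pr cop, of n t] by (auto simp: fa_def)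

lemma ee_eq: "int d * ee t = t + b * int (fa t)"
proof -
  have "int d dvd b * int (fa t) - (- t)" using fa_mod[of t] by (simp add: mod_eq_dvd_iff)
  hence "int d dvd t + b * int (fa t)" by (simp add: add.commute)
  thus ?thesis by (simp add: ee_def)
qed

lemma lam0: "lam t \<noteq> 0"
  using x0 w0 by (simp add: lam_def power_int_def)

lemma v_lam: "v (lam t) = t"
proof -
  have "v (lam t) = v (x ^ fa t) + v (w powi ee t)"
    unfolding lam_def using x0 w0 by (intro v_mult[OF nv]) (auto simp: power_int_def)
  also have "\<dots> = int (fa t) * (- b) + ee t * int d"
    using x0 w0 by (simp add: v_power[OF nv] v_powi[OF nv] vx vw)
  also have "\<dots> = t" using ee_eq[of t] by (simp add: algebra_simps)
  finally show ?thesis .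
qed

lemma lam_ratio:
  assumes "t1 mod int d = t2 mod int d"
  shows "lam t1 * inverse (lam t2) \<in> K"
proof -
  have "(- t1) mod int d = (- (t1 mod int d)) mod int d" by (rule mod_minus_eq[symmetric])
  also have "\<dots> = (- (t2 mod int d)) mod int d" by (simp only: assms)
  also have "\<dots> = (- t2) mod int d" by (rule mod_minus_eq)
  finally have "(- t1) mod int d = (- t2) mod int d" .
  hence e: "(b * int (fa t1)) mod int (p ^ n) = (- t2) mod int (p ^ n)" using fa_mod[of t1] by simp
  have "frak_a p n (\<lambda>_. b) t2 = fa t1" by (rule fa_unique[OF pr cop fa_lt[of t1] e])
  hence "fa t1 = fa t2" by (simp add: fa_def)
  hence "lam t1 * inverse (lam t2) = (x ^ fa t2 * inverse (x ^ fa t2)) * (w powi ee t1 * inverse (w powi ee t2))"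
    by (simp add: lam_def inverse_mult_distrib ac_simps)
  also have "x ^ fa t2 * inverse (x ^ fa t2) = 1" using x0 by simp
  finally have "lam t1 * inverse (lam t2) = w powi ee t1 * inverse (w powi ee t2)" by simp
  thus ?thesis using wK by (simp add: Kmult[OF sf] Kinv[OF sf] Kpowi[OF sf])
qed

lemma act_Psi:
  assumes i: "1 \<le> i" "i \<le> n"
  shows "An_elem_act p n T (Psi i) y = T (p ^ (n - i)) y"
proof -
  have lt: "p ^ (n - i) < d"
    using i pr using prime_gt_1_nat[OF pr] by (intro power_strict_increasing) auto
  have "An_elem_act p n T (Psi i) y = (\<Sum>j<d. (if j = p ^ (n - i) then T j y else 0))"
    unfolding An_elem_act_def Psi_def by (rule sum.cong) simp_all
  also have "\<dots> = T (p ^ (n - i)) y" using lt by (simp add: sum.delta)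
  finally show ?thesis .
qed

lemma T_lam: "m < d \<Longrightarrow> T m (lam t) = w powi ee t * (of_nat (fa t choose m) * x ^ (fa t - m))"
proof -
  assume m: "m < d"
  have "T m (lam t) = T m (w powi ee t * x ^ fa t)" by (simp add: lam_def mult.commute)
  also have "\<dots> = w powi ee t * T m (x ^ fa t)"
    using T_linear[of m] Kpowi[OF sf wK] unfolding K_linear_def by blast
  also have "\<dots> = w powi ee t * (of_nat (fa t choose m) * x ^ (fa t - m))" by (simp add: T_mono fa_lt)
  finally show ?thesis .
qed

lemma scaffold:
  assumes "n = n"
  shows "An_scaffold_inf K v p n T (\<lambda>_. b) lam Psi"
  unfolding An_scaffold_inf_def
proof (intro conjI ballI allI impI)
  show "\<And>i. coprime b (int p)" by (rule cop)
  show "\<And>t. lam t \<noteq> 0" by (rule lam0)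
  show "\<And>t. v (lam t) = t" by (rule v_lam)
  show "\<And>t1 t2. t1 mod int d = t2 mod int d \<Longrightarrow> lam t1 * inverse (lam t2) \<in> K" by (rule lam_ratio)
  show "\<And>i j. Psi i j \<in> K" using K0[OF sf] K1[OF sf] by (simp add: Psi_def)
  fix i assume i: "i \<in> {1..n}"
  hence i1: "1 \<le> i" and i2: "i \<le> n" by auto
  let ?m = "p ^ (n - i)"
  have md: "?m < d" using i1 i2 pr using prime_gt_1_nat[OF pr] by (intro power_strict_increasing) auto
  have m0: "?m \<noteq> 0" using pr by (simp add: prime_gt_0_nat)
  show "An_elem_act p n T (Psi i) 1 = 0" using act_Psi[OF i1 i2] T_one m0 by simp
  fix t
  let ?s = "fa t"
  have dig: "(of_nat (?s choose ?m) :: 'a) = of_nat (digit p (n - i) ?s)"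
    using ofnat_choose_digit[OF pr ch] by (simp add: digit_def)
  have Tl: "An_elem_act p n T (Psi i) (lam t) = w powi ee t * (of_nat (digit p (n - i) ?s) * x ^ (?s - ?m))"
    using act_Psi[OF i1 i2] T_lam[OF md] dig by simp
  show "digit p (n - i) (frak_a p n (\<lambda>_. b) t) = 0 \<Longrightarrow> An_elem_act p n T (Psi i) (lam t) = 0"
    using Tl by (simp add: fa_def)
  assume dg: "1 \<le> digit p (n - i) (frak_a p n (\<lambda>_. b) t)"
  hence dg1: "0 < digit p (n - i) ?s" by (simp add: fa_def)
  have dgp: "digit p (n - i) ?s < p" using pr by (simp add: digit_def prime_gt_0_nat)
  have sm: "?m \<le> ?s"
  proof (rule ccontr)
    assume "\<not> ?m \<le> ?s"
    hence "?s div ?m = 0" by simp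
    thus False using dg1 by (simp add: digit_def)
  qed
  define s' where "s' = ?s - ?m"
  have s'd: "s' < d" using fa_lt[of t] by (simp add: s'_def)
  have s'i: "int s' = int ?s - int ?m" using sm by (simp add: s'_def)
  have "(b * int s') mod int d = (b * int ?s - int ?m * b) mod int d" by (simp add: s'i algebra_simps)
  also have "\<dots> = ((- t) - int ?m * b) mod int d" using fa_mod[of t] by (rule mod_diff_cong) simp
  also have "\<dots> = (- (t + int ?m * b)) mod int d" by (simp add: algebra_simps)
  finally have fa': "fa (t + int ?m * b) = s'" unfolding fa_def by (rule fa_unique[OF pr cop s'd])
  have e2: "t + int ?m * b + b * int s' = t + b * int (fa t)"
  proof -
    have "t + int ?m * b + b * int s' = t + b * (int s' + int ?m)" by (simp add: algebra_simps)
    also have "int s' + int ?m = int (fa t)" using s'i by simp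
    finally show ?thesis .
  qed
  have "ee (t + int ?m * b) = ee t"
    unfolding ee_def fa' e2 ..
  with fa' have lam': "lam (t + int ?m * b) = x ^ s' * w powi ee t" by (simp add: lam_def)
  define u where "u = (of_nat (digit p (n - i) ?s) :: 'a)"
  have u: "u \<noteq> 0 \<and> v u = 0" unfolding u_def by (rule ofnat_unit_v[OF nv pr ch dg1 dgp])
  have uK: "u \<in> K" unfolding u_def by (rule Kofnat[OF sf])
  have "An_elem_act p n T (Psi i) (lam t) = u * lam (t + int (p ^ (n - i)) * b)"
    using Tl lam' by (simp add: u_def s'_def algebra_simps)
  thus "\<exists>u\<in>K. u \<noteq> 0 \<and> v u = 0 \<and> An_elem_act p n T (Psi i) (lam t) = u * lam (t + int (p ^ (n - i)) * b)"
    using u uK by blast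
qed

end






theorem theorem5p1:
  fixes K :: "'a::field set" and v :: "'a \<Rightarrow> int" and p n :: nat and b :: int
  assumes "prime p" and "of_nat p = (0::'a)"
    and "is_subfield K"
    and "normalized_discrete_valuation v"
    and "val_complete v K"
    and "totally_ramified_index v K (p ^ n)"
    and "ext_degree_eq K (p ^ n)"
    and "purely_inseparable K p"
    and "0 < b" and "b < int (p ^ n)" and "coprime b (int p)"
  shows "\<exists>T. An_hopf_galois K p n T \<and>
           (\<exists>lam Psi. An_scaffold_inf K v p n T (\<lambda>_. b) lam Psi)"
proof -
  note pr = assms(1) and ch = assms(2) and sf = assms(3) and nv = assms(4)
    and tr = assms(6) and ext = assms(7) and pis = assms(8) and b0 = assms(9) and cop = assms(11)
  obtain pi :: 'a where pi: "pi \<noteq> 0" "v pi = 1"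
    using nv unfolding normalized_discrete_valuation_def by blast
  have pid: "pi ^ (p ^ n) \<in> K" by (rule pi_pow_K[OF pr ch sf nv tr ext pis pi])
  define x where "x = inverse pi ^ nat b"
  have x0: "x \<noteq> 0" using pi by (simp add: x_def)
  have vx: "v x = - b"
    using pi b0 by (simp add: x_def v_power[OF nv] v_inverse[OF nv])
  have xd: "x ^ (p ^ n) \<in> K"
  proof -
    have "x ^ (p ^ n) = inverse (pi ^ (p ^ n)) ^ nat b"
      by (simp add: x_def power_inverse[symmetric] power_mult[symmetric] mult.commute)
    thus ?thesis using pid by (simp add: Kpow[OF sf] Kinv[OF sf])
  qed
  have copx: "coprime (v x) (int (p ^ n))" using cop vx by simp
  have indep: "\<forall>a. (\<forall>j<p ^ n. a j \<in> K) \<longrightarrow> (\<Sum>j<p ^ n. a j * x ^ j) = 0 \<longrightarrow> (\<forall>j<p ^ n. a j = 0)"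
  proof (rule allI, rule impI, rule impI)
    fix a :: "nat \<Rightarrow> 'a" assume "\<forall>j<p ^ n. a j \<in> K" "(\<Sum>j<p ^ n. a j * x ^ j) = 0"
    then show "\<forall>j<p ^ n. a j = 0" using pow_indep[OF nv tr x0 copx] by blast
  qed
  have span: "\<forall>y. \<exists>a. (\<forall>j<p ^ n. a j \<in> K) \<and> y = (\<Sum>j<p ^ n. a j * x ^ j)"
    using span_lemma[OF sf ext indep] by blast
  interpret hg K p n x
    by unfold_locales (use sf pr ch x0 xd indep span in auto)
  define w where "w = pi ^ (p ^ n)"
  have w: "w \<in> K" "w \<noteq> 0" "v w = int (p ^ n)"
    using pid pi by (auto simp: w_def v_power[OF nv])
  interpret sc K p n x v b w
    by unfold_locales (use nv cop vx w in auto)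
  show ?thesis
    by (intro exI[of _ T] conjI hopf_galois exI[of _ lam] exI[of _ Psi] scaffold) simp
qed



end
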